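(* Let $\mathcal{O}$ be a nonempty set of quantum channels on $n$ qubits closed under composition, $\Psi$ a channel on $n$ qubits with $\gamma(\Psi)<\infty$, and $k\ge0$ an integer. Then for every sample $S=(z_1,\ldots,z_m)$, \[ \hat{G}_S(\mathcal{F}(\mathcal{O}^{(k)}_\Psi))\le\gamma^*\,\hat{G}_S(\mathcal{F}(\mathcal{O})),\qquad\gamma^*=\min\{1+2\gamma_{\max,n},(1+2\gamma(\Psi))^k\}, \] and for every distribution $D$, $G_D(\mathcal{F}(\mathcal{O}^{(k)}_\Psi))\le\gamma^*G_D(\mathcal{F}(\mathcal{O}))$.
   Context: A quantum channel on $n$ qubits is a completely positive trace-preserving linear map on $2^n\times2^n$ complex matrices. For a channel $\Phi$, $f_\Phi(x,y)=\mathrm{Tr}[\Phi(|x\rangle\langle x|)\,|y\rangle\langle y|]$; $\mathcal{F}(\Omega)=\{f_\Phi:\Phi\in\Omega\}$. Empirical Gaussian complexity: $\hat{G}_S(\mathcal{G})=\mathbb{E}_{g}[\sup_{h\in\mathcal{G}}\frac1m\sum_i g_i h(z_i)]$ with $g_i$ i.i.d. $\mathcal{N}(0,1)$; $G_D(\mathcal{G})=\mathbb{E}_{S\sim D^m}\hat{G}_S(\mathcal{G})$. Free robustness w.r.t. $\mathcal{O}$: $\gamma(\Phi)=\inf\{\lambda\ge0:\exists\,\Phi'\in\mathrm{Conv}(\mathcal{O}),\ (\Phi+\lambda\Phi')/(1+\lambda)\in\mathrm{Conv}(\mathcal{O})\}$; $\gamma_{\max,n}=\sup$ of $\gamma(\Phi)$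 over all channels on $n$ qubits (if infinite, $\gamma^*=(1+2\gamma(\Psi))^k$). $\mathcal{O}^{(k)}_\Psi$ is the set of all finite compositions of elements of $\mathcal{O}\cup\{\Psi\}$ in which $\Psi$ appears at most $k$ times. *)

theory Defs
  imports "HOL-Probability.Probability" "Jordan_Normal_Form.Matrix"
begin

definition mtrace :: "complex mat \<Rightarrow> complex" where
  "mtrace A = (\<Sum>i<dim_row A. A $$ (i,i))"

definition psd :: "nat \<Rightarrow> complex mat \<Rightarrow> bool" where
  "psd d A \<longleftrightarrow> A \<in> carrier_mat d d \<and>
     (\<forall>v :: nat \<Rightarrow> complex.
        let q = (\<Sum>i<d. \<Sum>j<d. cnj (v i) * A $$ (i,j) * v j) in Im q = 0 \<and> Re q \<ge> 0)"

text \<open>Block (i,j) (of size N x N) of a kN x kN matrix viewed as element of M_k tensor M_N.\<close>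
definition blk :: "nat \<Rightarrow> complex mat \<Rightarrow> nat \<Rightarrow> nat \<Rightarrow> complex mat" where
  "blk N X i j = mat N N (\<lambda>(a,b). X $$ (i*N + a, j*N + b))"

text \<open>Ampliation (id_k tensor Phi) applied to a kN x kN matrix.\<close>
definition ampl :: "nat \<Rightarrow> nat \<Rightarrow> (complex mat \<Rightarrow> complex mat) \<Rightarrow> complex mat \<Rightarrow> complex mat" where
  "ampl N k \<Phi> X = mat (k*N) (k*N) (\<lambda>(p,q). \<Phi> (blk N X (p div N) (q div N)) $$ (p mod N, q mod N))"

text \<open>A channel on N x N matrices, represented as a function on complex matrices which is
  the zero matrix outside the carrier (extensional normalisation).\<close>
definition is_channel :: "nat \<Rightarrow> (complex mat \<Rightarrow> complex mat) \<Rightarrow> bool" where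
  "is_channel N \<Phi> \<longleftrightarrow>
     (\<forall>A. A \<notin> carrier_mat N N \<longrightarrow> \<Phi> A = 0\<^sub>m N N) \<and>
     (\<forall>A \<in> carrier_mat N N. \<Phi> A \<in> carrier_mat N N) \<and>
     (\<forall>A \<in> carrier_mat N N. \<forall>B \<in> carrier_mat N N. \<Phi> (A + B) = \<Phi> A + \<Phi> B) \<and>
     (\<forall>A \<in> carrier_mat N N. \<forall>c. \<Phi> (c \<cdot>\<^sub>m A) = c \<cdot>\<^sub>m \<Phi> A) \<and>
     (\<forall>k X. psd (k*N) X \<longrightarrow> psd (k*N) (ampl N k \<Phi> X)) \<and>
     (\<forall>A \<in> carrier_mat N N. mtrace (\<Phi> A) = mtrace A)"

definition qchannel :: "nat \<Rightarrow> (complex mat \<Rightarrow> complex mat) \<Rightarrow> bool" where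
  "qchannel n \<Phi> \<longleftrightarrow> is_channel (2^n) \<Phi>"

definition conv_ch :: "nat \<Rightarrow> (complex mat \<Rightarrow> complex mat) set \<Rightarrow> (complex mat \<Rightarrow> complex mat) set" where
  "conv_ch N \<O> = {\<Phi>. \<exists>(r::nat) (c::nat \<Rightarrow> real) Ps.
      (\<forall>i<r. c i \<ge> 0 \<and> Ps i \<in> \<O>) \<and> (\<Sum>i<r. c i) = 1 \<and>
      \<Phi> = (\<lambda>A. mat N N (\<lambda>ab. \<Sum>i<r. complex_of_real (c i) * (Ps i A) $$ ab))}"

definition mix_ch :: "nat \<Rightarrow> real \<Rightarrow> (complex mat \<Rightarrow> complex mat) \<Rightarrow> (complex mat \<Rightarrow> complex mat)
    \<Rightarrow> (complex mat \<Rightarrow> complex mat)" where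
  "mix_ch N l \<Phi> \<Phi>' = (\<lambda>A. mat N N (\<lambda>ab. (\<Phi> A $$ ab + complex_of_real l * \<Phi>' A $$ ab) / complex_of_real (1 + l)))"

text \<open>Free robustness (infinite if no admissible lambda exists).\<close>
definition robustness :: "nat \<Rightarrow> (complex mat \<Rightarrow> complex mat) set \<Rightarrow> (complex mat \<Rightarrow> complex mat) \<Rightarrow> ereal" where
  "robustness n \<O> \<Phi> = Inf {ereal l | l. l \<ge> 0 \<and>
      (\<exists>\<Phi>' \<in> conv_ch (2^n) \<O>. mix_ch (2^n) l \<Phi> \<Phi>' \<in> conv_ch (2^n) \<O>)}"

definition gamma_max :: "nat \<Rightarrow> (complex mat \<Rightarrow> complex mat) set \<Rightarrow> ereal" where
  "gamma_max n \<O> = (SUP \<Phi> \<in> {\<Phi>. qchannel n \<Phi>}. robustness n \<O> \<Phi>)"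

text \<open>O^(k)_Psi: nonempty finite compositions of elements of O and Psi, where each slot is
  either an element of O (Some) or Psi (None), with at most k slots equal to Psi.\<close>
definition comp_slots :: "(complex mat \<Rightarrow> complex mat) \<Rightarrow> (complex mat \<Rightarrow> complex mat) option list
    \<Rightarrow> (complex mat \<Rightarrow> complex mat)" where
  "comp_slots \<Psi> L = foldr (\<lambda>s acc. (case s of None \<Rightarrow> \<Psi> | Some \<Phi> \<Rightarrow> \<Phi>) \<circ> acc) L id"

definition O_k :: "(complex mat \<Rightarrow> complex mat) set \<Rightarrow> (complex mat \<Rightarrow> complex mat) \<Rightarrow> nat
    \<Rightarrow> (complex mat \<Rightarrow> complex mat) set" where
  "O_k \<O> \<Psi> k = {comp_slots \<Psi> L | L. L \<noteq> [] \<and> (\<forall>s \<in> set L. s = None \<or> the s \<in> \<O>)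
      \<and> length (filter (\<lambda>s. s = None) L) \<le> k}"

definition ketbra :: "nat \<Rightarrow> nat \<Rightarrow> complex mat" where
  "ketbra N x = mat N N (\<lambda>(i,j). if i = x \<and> j = x then 1 else 0)"

text \<open>f_Phi(x,y) = Tr[Phi(|x><x|) |y><y|] (a real number for a channel).\<close>
definition f_ch :: "nat \<Rightarrow> (complex mat \<Rightarrow> complex mat) \<Rightarrow> nat \<times> nat \<Rightarrow> real" where
  "f_ch n \<Phi> z = Re (mtrace (\<Phi> (ketbra (2^n) (fst z)) * ketbra (2^n) (snd z)))"

definition F_cls :: "nat \<Rightarrow> (complex mat \<Rightarrow> complex mat) set \<Rightarrow> (nat \<times> nat \<Rightarrow> real) set" where
  "F_cls n \<Omega> = f_ch n ` \<Omega>"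

text \<open>Domain {0,1}^n x {0,1}^n, basis states encoded as numbers < 2^n.\<close>
definition dom_n :: "nat \<Rightarrow> (nat \<times> nat) set" where
  "dom_n n = {..<2^n} \<times> {..<2^n}"

definition gauss_m :: "nat \<Rightarrow> (nat \<Rightarrow> real) measure" where
  "gauss_m m = PiM {..<m} (\<lambda>_. density lborel std_normal_density)"

definition emp_gauss :: "nat \<Rightarrow> (nat \<Rightarrow> 'z) \<Rightarrow> ('z \<Rightarrow> real) set \<Rightarrow> real" where
  "emp_gauss m S H = (\<integral>g. (SUP h \<in> H. (1 / real m) * (\<Sum>i<m. g i * h (S i))) \<partial>gauss_m m)"

definition gauss_cx :: "nat \<Rightarrow> 'z pmf \<Rightarrow> 'z \<Rightarrow> ('z \<Rightarrow> real) set \<Rightarrow> real" where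
  "gauss_cx m D dflt H = measure_pmf.expectation (Pi_pmf {..<m} dflt (\<lambda>_. D)) (\<lambda>S. emp_gauss m S H)"

end

theory Submission
  imports Defs
begin


abbreviation "NG \<equiv> density lborel std_normal_density"

lemma prob_NG: "prob_space NG"
  by (rule prob_space_normal_density) simp

lemma prob_gauss: "prob_space (gauss_m m)"
  unfolding gauss_m_def by (intro prob_space_PiM prob_NG)

lemma sets_NG: "sets NG = sets borel" by simp

lemma comp_meas_NG: "i < m \<Longrightarrow> (\<lambda>g. g i) \<in> gauss_m m \<rightarrow>\<^sub>M NG"
  unfolding gauss_m_def by (intro measurable_component_singleton) auto

lemma comp_meas: "i < m \<Longrightarrow> (\<lambda>g. g i) \<in> borel_measurable (gauss_m m)"
  using comp_meas_NG[of i m] measurable_cong_sets[OF refl sets_NG, of "gauss_m m"] by simp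

lemma int_NG_abs: "integrable NG (\<lambda>x. \<bar>x\<bar>)"
  using integrable_std_normal_moment_abs[of 1] by (subst integrable_density) auto

lemma int_comp_abs: "i < m \<Longrightarrow> integrable (gauss_m m) (\<lambda>g. \<bar>g i\<bar>)"
proof -
  assume i: "i<m"
  have d: "distr (gauss_m m) NG (\<lambda>g. g i) = NG"
    unfolding gauss_m_def using i by (intro distr_PiM_component prob_NG) auto
  have ab: "(\<lambda>x::real. \<bar>x\<bar>) \<in> borel_measurable NG"
    using measurable_cong_sets[OF sets_NG refl, of borel] by simp
  have "integrable (distr (gauss_m m) NG (\<lambda>g. g i)) (\<lambda>x. \<bar>x\<bar>)" using d int_NG_abs by simp
  then show ?thesis using integrable_distr_eq[OF comp_meas_NG[OF i] ab] by simp
qed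

lemma NG_neg: "distr NG NG uminus = NG"
proof -
  have 1: "distr lborel lborel uminus = (lborel::real measure)"
    using lborel_distr_uminus by (metis distr_cong sets_lborel)
  have 2: "distr (density (distr lborel lborel uminus) (\<lambda>x. ennreal (std_normal_density x))) lborel uminus
      = density lborel ((\<lambda>x. ennreal (std_normal_density x)) \<circ> uminus)"
    by (rule distr_density_distr) auto
  have 3: "((\<lambda>x. ennreal (std_normal_density x)) \<circ> uminus) = (\<lambda>x. ennreal (std_normal_density x))"
    by (auto simp: o_def normal_density_def)
  have "distr NG lborel uminus = NG" using 1 2 3 by simp
  moreover have "distr NG NG uminus = distr NG lborel uminus" by (rule distr_cong) auto
  ultimately show ?thesis by simp
qed

definition negm :: "nat \<Rightarrow> (nat \<Rightarrow> real) \<Rightarrow> (nat \<Rightarrow> real)" where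
  "negm m = compose {..<m} uminus"

lemma negm_app: "i < m \<Longrightarrow> negm m g i = - g i"
  by (simp add: negm_def compose_def)

lemma negm_meas: "negm m \<in> gauss_m m \<rightarrow>\<^sub>M gauss_m m"
  unfolding negm_def gauss_m_def compose_def
proof (rule measurable_restrict)
  fix i :: nat assume i: "i \<in> {..<m}"
  have u: "(uminus::real\<Rightarrow>real) \<in> NG \<rightarrow>\<^sub>M NG"
    using measurable_cong_sets[OF sets_NG sets_NG] by simp
  show "(\<lambda>x. - x i) \<in> Pi\<^sub>M {..<m} (\<lambda>_. NG) \<rightarrow>\<^sub>M NG"
    using measurable_compose[OF measurable_component_singleton[OF i] u] by simp
qed

lemma distr_negm: "distr (gauss_m m) (gauss_m m) (negm m) = gauss_m m"
proof -
  have "distr (gauss_m m) (gauss_m m) (negm m) = PiM {..<m} (\<lambda>i. distr NG NG uminus)"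
    unfolding negm_def gauss_m_def
    by (rule distr_PiM_finite_prob_space') (auto intro: prob_NG)
  then show ?thesis using NG_neg by (simp add: gauss_m_def)
qed



lemma sum_bound_abs:
  fixes g v :: "nat \<Rightarrow> real"
  assumes "\<forall>i<m. \<bar>v i\<bar> \<le> 1"
  shows "\<bar>\<Sum>i<m. g i * v i\<bar> \<le> (\<Sum>i<m. \<bar>g i\<bar>)"
proof -
  have "\<bar>\<Sum>i<m. g i * v i\<bar> \<le> (\<Sum>i<m. \<bar>g i * v i\<bar>)" by (rule sum_abs)
  also have "\<dots> \<le> (\<Sum>i<m. \<bar>g i\<bar>)"
  proof (rule sum_mono)
    fix i assume "i \<in> {..<m}"
    then have "\<bar>v i\<bar> \<le> 1" using assms by auto
    then show "\<bar>g i * v i\<bar> \<le> \<bar>g i\<bar>" by (simp add: abs_mult mult_left_le)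
  qed
  finally show ?thesis .
qed

lemma sum_diff_bound:
  fixes g q v :: "nat \<Rightarrow> real"
  assumes "\<forall>i<m. \<bar>v i\<bar> \<le> 1" "\<forall>i<m. \<bar>q i - g i\<bar> \<le> d"
  shows "\<bar>(\<Sum>i<m. q i * v i) - (\<Sum>i<m. g i * v i)\<bar> \<le> real m * d"
proof -
  have "(\<Sum>i<m. q i * v i) - (\<Sum>i<m. g i * v i) = (\<Sum>i<m. (q i - g i) * v i)"
    by (simp add: sum_subtractf left_diff_distrib)
  also have "\<bar>\<dots>\<bar> \<le> (\<Sum>i<m. \<bar>q i - g i\<bar>)" by (rule sum_bound_abs[OF assms(1)])
  also have "\<dots> \<le> (\<Sum>i<m. d)" by (rule sum_mono) (use assms(2) in auto)
  finally show ?thesis by simp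
qed

lemma rat_approx_list:
  fixes g :: "nat \<Rightarrow> real"
  assumes "d > 0"
  shows "\<exists>qs::rat list. length qs = m \<and> (\<forall>i<m. \<bar>of_rat (qs ! i) - g i\<bar> \<le> d)"
proof -
  have ex: "\<exists>q::rat. \<bar>of_rat q - g i\<bar> \<le> d" for i
  proof -
    obtain r where r: "r \<in> \<rat>" "g i - d < r" "r < g i + d"
      using Rats_dense_in_real[of "g i - d" "g i + d"] assms by auto
    then obtain q where "r = of_rat q" by (auto elim: Rats_cases)
    then show ?thesis using r by (intro exI[of _ q]) auto
  qed
  define qs where "qs = map (\<lambda>i. SOME q::rat. \<bar>of_rat q - g i\<bar> \<le> d) [0..<m]"
  have "\<forall>i<m. \<bar>of_rat (qs ! i) - g i\<bar> \<le> d"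
    using someI_ex[OF ex] by (auto simp: qs_def)
  then show ?thesis by (intro exI[of _ qs]) (auto simp: qs_def)
qed



lemma gauss_bound:
  fixes H0 H :: "('z \<Rightarrow> real) set" and S :: "nat \<Rightarrow> 'z" and N :: real and m :: nat
  assumes H0ne: "H0 \<noteq> {}" and H0b: "\<forall>h\<in>H0. \<forall>i<m. \<bar>h (S i)\<bar> \<le> 1"
    and Hne: "H \<noteq> {}" and N0: "N \<ge> 0"
    and comb: "\<forall>f\<in>H. \<exists>(r::nat) (c::nat\<Rightarrow>real) hs. (\<forall>j<r. hs j \<in> H0) \<and> (\<Sum>j<r. c j) = 1
          \<and> (\<Sum>j<r. \<bar>c j\<bar>) \<le> 1 + 2 * N
          \<and> (\<forall>i<m. f (S i) = (\<Sum>j<r. c j * hs j (S i)))"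
  shows "emp_gauss m S H \<le> (1 + 2 * N) * emp_gauss m S H0 \<and> 0 \<le> emp_gauss m S H0"
proof -
  define M where "M = gauss_m m"
  define l where "l = (\<lambda>(v::'z\<Rightarrow>real) (g::nat\<Rightarrow>real). (1 / real m) * (\<Sum>i<m. g i * v (S i)))"
  define B where "B = (\<lambda>g::nat\<Rightarrow>real. (1 / real m) * (\<Sum>i<m. \<bar>g i\<bar>))"
  define X where "X = (\<lambda>g. SUP h\<in>H0. l h g)"
  obtain h0 where h0: "h0 \<in> H0" using H0ne by auto
  have lb: "\<bar>l h g\<bar> \<le> B g" if "h \<in> H0" for h g
  proof -
    have "\<bar>\<Sum>i<m. g i * h (S i)\<bar> \<le> (\<Sum>i<m. \<bar>g i\<bar>)"
      using H0b that by (intro sum_bound_abs) auto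
    then show ?thesis unfolding l_def B_def by (simp add: abs_mult divide_right_mono)
  qed
  have bdd: "bdd_above ((\<lambda>h. l h g) ` A)" if "A \<subseteq> H0" for A g
    using lb that by (intro bdd_aboveI[of _ "B g"]) (auto simp: abs_le_iff)
  have Xub: "l h g \<le> X g" if "h \<in> H0" for h g
    unfolding X_def using that bdd[of H0 g] by (intro cSUP_upper) auto
  have Xle: "X g \<le> B g" for g
    unfolding X_def using H0ne lb by (intro cSUP_least) (auto simp: abs_le_iff)
  have Xge: "- B g \<le> X g" for g
    using Xub[OF h0, of g] lb[OF h0, of g] by (auto simp: abs_le_iff)
  have l_neg: "l h (negm m g) = - l h g" for h g
    unfolding l_def by (simp add: negm_app sum_negf)
  define T where "T = (\<lambda>(qs::rat list) (v::'z\<Rightarrow>real). (\<Sum>i<m. of_rat (qs ! i) * v (S i)))"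
  define P where "P = {p::rat list \<times> rat. \<exists>h\<in>H0. T (fst p) h > of_rat (snd p)}"
  define pick where "pick = (\<lambda>p::rat list \<times> rat. SOME h. h \<in> H0 \<and> T (fst p) h > of_rat (snd p))"
  define D where "D = insert h0 (pick ` P)"
  have pickP: "pick p \<in> H0 \<and> T (fst p) (pick p) > of_rat (snd p)" if "p \<in> P" for p
  proof -
    have "\<exists>h. h \<in> H0 \<and> T (fst p) h > of_rat (snd p)" using that unfolding P_def by auto
    then show ?thesis unfolding pick_def by (rule someI_ex)
  qed
  have DH0: "D \<subseteq> H0" using pickP h0 unfolding D_def by auto
  have Dne: "D \<noteq> {}" unfolding D_def by auto
  have cntD: "countable D" unfolding D_def by (intro countable_insert countable_image) auto
  have XD: "X g = (SUP d\<in>D. l d g)" for g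
  proof (rule antisym)
    show "X g \<le> (SUP d\<in>D. l d g)"
      unfolding X_def
    proof (rule cSUP_least[OF H0ne])
      fix h assume h: "h \<in> H0"
      have upD: "l d g \<le> (SUP d\<in>D. l d g)" if "d \<in> D" for d
        using that bdd[OF DH0, of g] by (intro cSUP_upper) auto
      show "l h g \<le> (SUP d\<in>D. l d g)"
      proof (cases "m = 0")
        case True
        then have "l h g = l h0 g" by (simp add: l_def)
        then show ?thesis using upD[of h0] by (simp add: D_def)
      next
        case False
        then have m0: "real m > 0" by simp
        show ?thesis
        proof (rule field_le_epsilon)
          fix e :: real assume e: "e > 0"
          define dl where "dl = e / 4"
          obtain qs :: "rat list" where qs: "length qs = m" "\<forall>i<m. \<bar>of_rat (qs ! i) - g i\<bar> \<le> dl"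
            using rat_approx_list[of dl m g] e by (auto simp: dl_def)
          have close: "\<bar>T qs v - (\<Sum>i<m. g i * v (S i))\<bar> \<le> real m * dl" if "v \<in> H0" for v
            unfolding T_def using H0b that qs(2) by (intro sum_diff_bound) auto
          define ee where "ee = real m * e / 2"
          have ee0: "ee > 0" using m0 e by (simp add: ee_def)
          obtain r where r: "r \<in> \<rat>" "T qs h - ee < r" "r < T qs h"
            using Rats_dense_in_real[of "T qs h - ee" "T qs h"] ee0 by auto
          then obtain rq where rq: "r = of_rat rq" by (auto elim: Rats_cases)
          have pP: "(qs, rq) \<in> P" unfolding P_def using h r rq by auto
          define d where "d = pick (qs, rq)"
          have dD: "d \<in> D" unfolding D_def d_def using pP by auto
          have dH: "d \<in> H0" and dT: "T qs d > r" using pickP[OF pP] rq by (auto simp: d_def)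
          have "(\<Sum>i<m. g i * d (S i)) \<ge> T qs d - real m * dl" using close[OF dH] by auto
          moreover have "T qs h \<ge> (\<Sum>i<m. g i * h (S i)) - real m * dl" using close[OF h] by auto
          ultimately have "(\<Sum>i<m. g i * d (S i)) \<ge> (\<Sum>i<m. g i * h (S i)) - real m * e"
            using dT r(2) unfolding ee_def dl_def by (simp add: field_simps)
          then have "((\<Sum>i<m. g i * h (S i)) - real m * e) / real m \<le> (\<Sum>i<m. g i * d (S i)) / real m"
            using m0 by (intro divide_right_mono) auto
          then have "l d g \<ge> l h g - e"
            unfolding l_def using m0 by (simp add: diff_divide_distrib)
          then show "l h g \<le> (SUP d\<in>D. l d g) + e" using upD[OF dD] by simp
        qed
      qed
    qed
    show "(SUP d\<in>D. l d g) \<le> X g"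
      unfolding X_def using Dne DH0 bdd[of H0 g] by (intro cSUP_subset_mono) auto
  qed
  have l_meas: "l h \<in> borel_measurable M" for h
    unfolding l_def M_def by (intro borel_measurable_times borel_measurable_sum
        borel_measurable_const comp_meas) auto
  have X_meas: "X \<in> borel_measurable M"
  proof -
    have "(\<lambda>g. SUP d\<in>D. l d g) \<in> borel_measurable M"
      using cntD l_meas bdd[OF DH0] by (intro borel_measurable_cSUP) auto
    then show ?thesis using XD by (simp add: fun_eq_iff[symmetric] XD[abs_def])
  qed
  have B_int: "integrable M B"
    unfolding B_def M_def by (intro integrable_mult_right Bochner_Integration.integrable_sum int_comp_abs) auto
  have XB: "norm (X g) \<le> norm (B g)" for g
  proof -
    have "- B g \<le> X g" "X g \<le> B g" using Xle Xge by auto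
    then show ?thesis by auto
  qed
  have X_int: "integrable M X"
    by (rule Bochner_Integration.integrable_bound[OF B_int X_meas]) (use XB in auto)
  have negm_meas': "negm m \<in> M \<rightarrow>\<^sub>M M" unfolding M_def by (rule negm_meas)
  have distrM: "distr M M (negm m) = M" unfolding M_def by (rule distr_negm)
  define Y where "Y = (\<lambda>g. X (negm m g))"
  have Y_int: "integrable M Y"
  proof -
    have "integrable (distr M M (negm m)) X" using distrM X_int by simp
    then show ?thesis unfolding Y_def using integrable_distr_eq[OF negm_meas' X_meas] by simp
  qed
  have Y_eq: "integral\<^sup>L M Y = integral\<^sup>L M X"
    unfolding Y_def using integral_distr[OF negm_meas' X_meas] distrM by simp
  have XY: "0 \<le> X g + Y g" for g
    using Xub[OF h0, of g] Xub[OF h0, of "negm m g"] l_neg[of h0 g] by (simp add: Y_def)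
  have ly: "- l h g \<le> Y g" if "h \<in> H0" for h g
    using Xub[OF that, of "negm m g"] l_neg by (simp add: Y_def)
  have intX0: "0 \<le> integral\<^sup>L M X"
  proof -
    have "0 \<le> integral\<^sup>L M (\<lambda>g. X g + Y g)" by (rule integral_nonneg_AE) (use XY in auto)
    also have "\<dots> = integral\<^sup>L M X + integral\<^sup>L M Y" using X_int Y_int by simp
    finally show ?thesis using Y_eq by simp
  qed
  have fb: "l f g \<le> X g + N * (X g + Y g)" if f: "f \<in> H" for f g
  proof -
    obtain r :: nat and c :: "nat \<Rightarrow> real" and hs where hs: "\<forall>j<r. hs j \<in> H0" and c1: "(\<Sum>j<r. c j) = 1"
      and cN: "(\<Sum>j<r. \<bar>c j\<bar>) \<le> 1 + 2 * N"
      and fe: "\<forall>i<m. f (S i) = (\<Sum>j<r. c j * hs j (S i))"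
      using bspec[OF comb f] by blast
    have "l f g = (1 / real m) * (\<Sum>i<m. g i * (\<Sum>j<r. c j * hs j (S i)))"
      unfolding l_def using fe by simp
    also have "\<dots> = (\<Sum>j<r. c j * l (hs j) g)"
      unfolding l_def by (simp add: sum_distrib_left sum.swap[of _ "{..<m}"] ac_simps)
    also have "\<dots> \<le> (\<Sum>j<r. max (c j) 0 * X g + max (- c j) 0 * Y g)"
    proof (rule sum_mono)
      fix j assume "j \<in> {..<r}"
      then have hj: "hs j \<in> H0" using hs by auto
      show "c j * l (hs j) g \<le> max (c j) 0 * X g + max (- c j) 0 * Y g"
      proof (cases "c j \<ge> 0")
        case True
        then show ?thesis using Xub[OF hj, of g] by (simp add: mult_left_mono)
      next
        case False
        then have "c j * l (hs j) g = (- c j) * (- l (hs j) g)" by simp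
        also have "\<dots> \<le> (- c j) * Y g" using ly[OF hj, of g] False by (intro mult_left_mono) auto
        finally show ?thesis using False by simp
      qed
    qed
    also have "\<dots> = (\<Sum>j<r. max (c j) 0) * X g + (\<Sum>j<r. max (- c j) 0) * Y g"
      by (simp add: sum.distrib sum_distrib_right)
    finally have 1: "l f g \<le> (\<Sum>j<r. max (c j) 0) * X g + (\<Sum>j<r. max (- c j) 0) * Y g" .
    have pq1: "(\<Sum>j<r. max (c j) 0) - (\<Sum>j<r. max (- c j) 0) = 1"
    proof -
      have "(\<Sum>j<r. max (c j) 0) - (\<Sum>j<r. max (- c j) 0) = (\<Sum>j<r. c j)"
        by (subst sum_subtractf[symmetric]) (rule sum.cong, auto)
      then show ?thesis using c1 by simp
    qed
    have pq2: "(\<Sum>j<r. max (c j) 0) + (\<Sum>j<r. max (- c j) 0) = (\<Sum>j<r. \<bar>c j\<bar>)"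
      by (subst sum.distrib[symmetric]) (rule sum.cong, auto)
    define Q where "Q = (\<Sum>j<r. max (- c j) 0)"
    have QN: "Q \<le> N" using pq1 pq2 cN unfolding Q_def by linarith
    have "(\<Sum>j<r. max (c j) 0) = 1 + Q" using pq1 unfolding Q_def by simp
    then have "l f g \<le> X g + Q * (X g + Y g)" using 1 unfolding Q_def[symmetric] by (simp add: algebra_simps)
    also have "\<dots> \<le> X g + N * (X g + Y g)" using QN XY[of g] by (simp add: mult_right_mono)
    finally show ?thesis .
  qed
  define Z where "Z = (\<lambda>g. SUP f\<in>H. l f g)"
  have Zb: "Z g \<le> X g + N * (X g + Y g)" for g
    unfolding Z_def using Hne fb by (intro cSUP_least) auto
  have EZ: "emp_gauss m S H = integral\<^sup>L M Z"
    unfolding emp_gauss_def Z_def l_def M_def by simp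
  have EX: "emp_gauss m S H0 = integral\<^sup>L M X"
    unfolding emp_gauss_def X_def l_def M_def by simp
  have "integral\<^sup>L M Z \<le> (1 + 2 * N) * integral\<^sup>L M X"
  proof (cases "integrable M Z")
    case True
    have "integral\<^sup>L M Z \<le> integral\<^sup>L M (\<lambda>g. X g + N * (X g + Y g))"
      using True X_int Y_int Zb by (intro integral_mono) auto
    also have "\<dots> = integral\<^sup>L M X + N * (integral\<^sup>L M X + integral\<^sup>L M Y)"
      using X_int Y_int by simp
    finally show ?thesis using Y_eq by (simp add: algebra_simps)
  next
    case False
    then show ?thesis using intX0 N0 by (simp add: not_integrable_integral_eq)
  qed
  then show ?thesis using EZ EX intX0 by simp
qed



type_synonym cmap = "complex mat \<Rightarrow> complex mat"

definition combo :: "cmap set \<Rightarrow> nat \<Rightarrow> cmap \<Rightarrow> real \<Rightarrow> bool" where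
  "combo Os N T W \<longleftrightarrow> (\<exists>(r::nat) (c::nat\<Rightarrow>real) Ps. (\<forall>j<r. Ps j \<in> Os) \<and> (\<Sum>j<r. c j) = 1
     \<and> (\<Sum>j<r. \<bar>c j\<bar>) \<le> W \<and>
     (\<forall>A\<in>carrier_mat N N. T A \<in> carrier_mat N N \<and>
        (\<forall>a<N. \<forall>b<N. T A $$ (a,b) = (\<Sum>j<r. complex_of_real (c j) * Ps j A $$ (a,b)))))"

lemma sum_split_nat: "(\<Sum>t<a+(b::nat). f t) = (\<Sum>t<a. f t) + (\<Sum>t<b. f (a+t))"
  by (induction b) (auto simp: add.assoc)

lemma sum_mult_idx: "(\<Sum>t<(r::nat)*R. f t) = (\<Sum>j<r. \<Sum>i<R. f (j*R+i))"
proof (induction r)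
  case 0 then show ?case by simp
next
  case (Suc r)
  have "(\<Sum>t<Suc r*R. f t) = (\<Sum>t<r*R + R. f t)" by (simp add: add.commute)
  also have "\<dots> = (\<Sum>t<r*R. f t) + (\<Sum>t<R. f (r*R+t))" by (rule sum_split_nat)
  finally show ?case using Suc by simp
qed

lemma chan_carrier: "is_channel N \<Phi> \<Longrightarrow> A \<in> carrier_mat N N \<Longrightarrow> \<Phi> A \<in> carrier_mat N N"
  unfolding is_channel_def by blast

lemma chan_add: "is_channel N \<Phi> \<Longrightarrow> A \<in> carrier_mat N N \<Longrightarrow> B \<in> carrier_mat N N \<Longrightarrow> \<Phi> (A + B) = \<Phi> A + \<Phi> B"
  unfolding is_channel_def by blast

lemma chan_smult: "is_channel N \<Phi> \<Longrightarrow> A \<in> carrier_mat N N \<Longrightarrow> \<Phi> (c \<cdot>\<^sub>m A) = c \<cdot>\<^sub>m \<Phi> A"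
  unfolding is_channel_def by blast

lemma chan_out: "is_channel N \<Phi> \<Longrightarrow> A \<notin> carrier_mat N N \<Longrightarrow> \<Phi> A = 0\<^sub>m N N"
  unfolding is_channel_def by blast

lemma chan_trace: "is_channel N \<Phi> \<Longrightarrow> A \<in> carrier_mat N N \<Longrightarrow> mtrace (\<Phi> A) = mtrace A"
  unfolding is_channel_def by blast

lemma chan_cp: "is_channel N \<Phi> \<Longrightarrow> psd (k*N) X \<Longrightarrow> psd (k*N) (ampl N k \<Phi> X)"
  unfolding is_channel_def by blast

lemma chan_zero: "is_channel N \<Phi> \<Longrightarrow> \<Phi> (0\<^sub>m N N) = 0\<^sub>m N N"
proof -
  assume ch: "is_channel N \<Phi>"
  have z: "(0::complex) \<cdot>\<^sub>m 0\<^sub>m N N = 0\<^sub>m N N" by (rule eq_matI) auto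
  have "\<Phi> (0\<^sub>m N N) = \<Phi> (0 \<cdot>\<^sub>m 0\<^sub>m N N)" using z by simp
  also have "\<dots> = 0 \<cdot>\<^sub>m \<Phi> (0\<^sub>m N N)" using chan_smult[OF ch, of "0\<^sub>m N N" 0] by simp
  also have "\<dots> = 0\<^sub>m N N" using chan_carrier[OF ch, of "0\<^sub>m N N"] by (intro eq_matI) auto
  finally show ?thesis .
qed

lemma lin_sum:
  assumes ch: "is_channel N U" and B: "\<forall>j<(r::nat). B j \<in> carrier_mat N N"
  shows "U (mat N N (\<lambda>ab. \<Sum>j<r. d j * B j $$ ab)) = mat N N (\<lambda>ab. \<Sum>j<r. d j * U (B j) $$ ab)"
  using B
proof (induction r)
  case 0
  have "mat N N (\<lambda>ab. \<Sum>j<0. d j * B j $$ ab) = 0\<^sub>m N N" by (rule eq_matI) auto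
  moreover have "mat N N (\<lambda>ab. \<Sum>j<0. d j * U (B j) $$ ab) = 0\<^sub>m N N" by (rule eq_matI) auto
  ultimately show ?case using chan_zero[OF ch] by simp
next
  case (Suc r)
  have Br: "B r \<in> carrier_mat N N" using Suc.prems by auto
  have e1: "mat N N (\<lambda>ab. \<Sum>j<Suc r. d j * B j $$ ab) = mat N N (\<lambda>ab. \<Sum>j<r. d j * B j $$ ab) + d r \<cdot>\<^sub>m B r"
    using Br by (intro eq_matI) auto
  have UBr: "U (B r) \<in> carrier_mat N N" using chan_carrier[OF ch Br] .
  have e2: "mat N N (\<lambda>ab. \<Sum>j<Suc r. d j * U (B j) $$ ab) = mat N N (\<lambda>ab. \<Sum>j<r. d j * U (B j) $$ ab) + d r \<cdot>\<^sub>m U (B r)"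
    using UBr by (intro eq_matI) auto
  have "U (mat N N (\<lambda>ab. \<Sum>j<Suc r. d j * B j $$ ab)) = U (mat N N (\<lambda>ab. \<Sum>j<r. d j * B j $$ ab)) + U (d r \<cdot>\<^sub>m B r)"
    unfolding e1 using Br by (intro chan_add[OF ch]) auto
  also have "\<dots> = mat N N (\<lambda>ab. \<Sum>j<r. d j * U (B j) $$ ab) + d r \<cdot>\<^sub>m U (B r)"
    using Suc chan_smult[OF ch Br] by simp
  finally show ?case using e2 by simp
qed

lemma combo_mono: "combo Os N T W \<Longrightarrow> W \<le> W' \<Longrightarrow> combo Os N T W'"
  unfolding combo_def by (meson order_trans)

lemma combo_single:
  assumes "\<Phi> \<in> Os" "is_channel N \<Phi>"
  shows "combo Os N \<Phi> 1"
  unfolding combo_def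
  by (rule exI[of _ 1], rule exI[of _ "\<lambda>_. 1"], rule exI[of _ "\<lambda>_. \<Phi>"])
    (use assms chan_carrier in auto)

lemma combo_rob:
  assumes ch: "is_channel N T" and l0: "0 \<le> l"
    and P': "\<Phi>' \<in> conv_ch N Os" and mx: "mix_ch N l T \<Phi>' \<in> conv_ch N Os"
    and Osch: "\<forall>\<Phi>\<in>Os. is_channel N \<Phi>"
  shows "combo Os N T (1 + 2 * l)"
proof -
  obtain r1 :: nat and c1 :: "nat \<Rightarrow> real" and P1 where
    p1: "\<forall>i<r1. c1 i \<ge> 0 \<and> P1 i \<in> Os" "(\<Sum>i<r1. c1 i) = 1"
      "\<Phi>' = (\<lambda>A. mat N N (\<lambda>ab. \<Sum>i<r1. complex_of_real (c1 i) * (P1 i A) $$ ab))"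
    using P' unfolding conv_ch_def by blast
  obtain r2 :: nat and c2 :: "nat \<Rightarrow> real" and P2 where
    p2: "\<forall>i<r2. c2 i \<ge> 0 \<and> P2 i \<in> Os" "(\<Sum>i<r2. c2 i) = 1"
      "mix_ch N l T \<Phi>' = (\<lambda>A. mat N N (\<lambda>ab. \<Sum>i<r2. complex_of_real (c2 i) * (P2 i A) $$ ab))"
    using mx unfolding conv_ch_def by blast
  define c where "c = (\<lambda>t. if t < r2 then (1 + l) * c2 t else - l * c1 (t - r2))"
  define Ps where "Ps = (\<lambda>t. if t < r2 then P2 t else P1 (t - r2))"
  have split: "(\<Sum>t<r2+r1. f t) = (\<Sum>t<r2. f t) + (\<Sum>t<r1. f (r2+t))" for f :: "nat \<Rightarrow> 'a::comm_monoid_add"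
    by (rule sum_split_nat)
  have Ps_in: "\<forall>j<r2+r1. Ps j \<in> Os" unfolding Ps_def using p1 p2 by auto
  have csum: "(\<Sum>t<r2+r1. c t) = 1"
    unfolding split c_def using p1(2) p2(2) by (simp add: sum_distrib_left[symmetric] sum_negf)
  have cabs: "(\<Sum>t<r2+r1. \<bar>c t\<bar>) \<le> 1 + 2 * l"
  proof -
    have "(\<Sum>t<r2. \<bar>c t\<bar>) = (\<Sum>t<r2. (1+l) * c2 t)"
      unfolding c_def using p2(1) l0 by (intro sum.cong) (auto simp: abs_mult)
    moreover have "(\<Sum>t<r1. \<bar>c (r2+t)\<bar>) = (\<Sum>t<r1. l * c1 t)"
      unfolding c_def using p1(1) l0 by (intro sum.cong) (auto simp: abs_mult)
    ultimately show ?thesis unfolding split using p1(2) p2(2) by (simp add: sum_distrib_left[symmetric])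
  qed
  have main: "T A $$ (a,b) = (\<Sum>t<r2+r1. complex_of_real (c t) * Ps t A $$ (a,b))"
    if A: "A \<in> carrier_mat N N" and a: "a < N" and b: "b < N" for A a b
  proof -
    have "mix_ch N l T \<Phi>' A $$ (a,b) = (T A $$ (a,b) + complex_of_real l * \<Phi>' A $$ (a,b)) / complex_of_real (1 + l)"
      unfolding mix_ch_def using a b by simp
    moreover have "mix_ch N l T \<Phi>' A $$ (a,b) = (\<Sum>i<r2. complex_of_real (c2 i) * (P2 i A) $$ (a,b))"
      using p2(3) a b by simp
    moreover have "\<Phi>' A $$ (a,b) = (\<Sum>i<r1. complex_of_real (c1 i) * (P1 i A) $$ (a,b))"
      using p1(3) a b by simp
    ultimately have "T A $$ (a,b) = complex_of_real (1 + l) * (\<Sum>i<r2. complex_of_real (c2 i) * (P2 i A) $$ (a,b))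
        - complex_of_real l * (\<Sum>i<r1. complex_of_real (c1 i) * (P1 i A) $$ (a,b))"
    proof -
      assume e1: "mix_ch N l T \<Phi>' A $$ (a,b) = (T A $$ (a,b) + complex_of_real l * \<Phi>' A $$ (a,b)) / complex_of_real (1 + l)"
        and e2: "mix_ch N l T \<Phi>' A $$ (a,b) = (\<Sum>i<r2. complex_of_real (c2 i) * (P2 i A) $$ (a,b))"
        and e3: "\<Phi>' A $$ (a,b) = (\<Sum>i<r1. complex_of_real (c1 i) * (P1 i A) $$ (a,b))"
      have nz: "complex_of_real (1 + l) \<noteq> 0" using l0 by (simp only: of_real_eq_0_iff)
      from e1 e2 have "T A $$ (a,b) + complex_of_real l * \<Phi>' A $$ (a,b)
          = complex_of_real (1 + l) * (\<Sum>i<r2. complex_of_real (c2 i) * (P2 i A) $$ (a,b))"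
        using nz by (simp add: field_simps)
      then show ?thesis using e3 by (simp add: algebra_simps)
    qed
    also have "\<dots> = (\<Sum>t<r2+r1. complex_of_real (c t) * Ps t A $$ (a,b))"
      unfolding split c_def Ps_def
      by (simp add: sum_distrib_left sum_negf algebra_simps)
    finally show ?thesis .
  qed
  show ?thesis unfolding combo_def
    using Ps_in csum cabs main chan_carrier[OF ch] by blast
qed



lemma combo_comp:
  assumes chU: "is_channel N U" and cU: "combo Os N U W1" and cT: "combo Os N T W2"
    and Osch: "\<forall>\<Phi>\<in>Os. is_channel N \<Phi>"
    and closed: "\<forall>\<Phi>\<in>Os. \<forall>\<Phi>'\<in>Os. \<Phi> \<circ> \<Phi>' \<in> Os"
  shows "combo Os N (U \<circ> T) (W1 * W2)"
proof -
  obtain r :: nat and c :: "nat \<Rightarrow> real" and Ps where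
    T1: "\<forall>j<r. Ps j \<in> Os" and T2: "(\<Sum>j<r. c j) = 1" and T3: "(\<Sum>j<r. \<bar>c j\<bar>) \<le> W2"
    and T4: "\<forall>A\<in>carrier_mat N N. T A \<in> carrier_mat N N \<and>
        (\<forall>a<N. \<forall>b<N. T A $$ (a,b) = (\<Sum>j<r. complex_of_real (c j) * Ps j A $$ (a,b)))"
    using cT unfolding combo_def by blast
  obtain R :: nat and d :: "nat \<Rightarrow> real" and Qs where
    U1: "\<forall>j<R. Qs j \<in> Os" and U2: "(\<Sum>j<R. d j) = 1" and U3: "(\<Sum>j<R. \<bar>d j\<bar>) \<le> W1"
    and U4: "\<forall>A\<in>carrier_mat N N. U A \<in> carrier_mat N N \<and>
        (\<forall>a<N. \<forall>b<N. U A $$ (a,b) = (\<Sum>j<R. complex_of_real (d j) * Qs j A $$ (a,b)))"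
    using cU unfolding combo_def by blast
  have R0: "R > 0" using U2 by (cases R) auto
  have dm: "(j*R+i) div R = j" "(j*R+i) mod R = i" if "i < R" for i j
    using that R0 by auto
  define e where "e = (\<lambda>t. c (t div R) * d (t mod R))"
  define Ps' where "Ps' = (\<lambda>t. Qs (t mod R) \<circ> Ps (t div R))"
  have "\<forall>t<r*R. Ps' t \<in> Os"
  proof (intro allI impI)
    fix t assume t: "t < r*R"
    have "t div R < r" using t R0 by (simp add: less_mult_imp_div_less)
    moreover have "t mod R < R" using R0 by simp
    ultimately show "Ps' t \<in> Os" unfolding Ps'_def using T1 U1 closed by auto
  qed
  moreover have "(\<Sum>t<r*R. e t) = 1"
  proof -
    have "(\<Sum>t<r*R. e t) = (\<Sum>j<r. \<Sum>i<R. c j * d i)"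
      unfolding sum_mult_idx e_def using dm by (intro sum.cong) auto
    also have "\<dots> = (\<Sum>j<r. c j)" by (simp add: sum_distrib_left[symmetric] U2)
    finally show ?thesis using T2 by simp
  qed
  moreover have "(\<Sum>t<r*R. \<bar>e t\<bar>) \<le> W1 * W2"
  proof -
    have "(\<Sum>t<r*R. \<bar>e t\<bar>) = (\<Sum>j<r. \<Sum>i<R. \<bar>c j\<bar> * \<bar>d i\<bar>)"
      unfolding sum_mult_idx e_def using dm by (intro sum.cong) (auto simp: abs_mult)
    also have "\<dots> = (\<Sum>j<r. \<bar>c j\<bar>) * (\<Sum>i<R. \<bar>d i\<bar>)"
      by (simp add: sum_product)
    also have "\<dots> \<le> W2 * W1"
      using T3 U3 by (intro mult_mono) (auto intro: sum_nonneg order_trans[OF _ T3])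
    finally show ?thesis by (simp add: mult.commute)
  qed
  moreover have "(U \<circ> T) A \<in> carrier_mat N N \<and>
        (\<forall>a<N. \<forall>b<N. (U \<circ> T) A $$ (a,b) = (\<Sum>t<r*R. complex_of_real (e t) * Ps' t A $$ (a,b)))"
    if A: "A \<in> carrier_mat N N" for A
  proof -
    have PA: "\<forall>j<r. Ps j A \<in> carrier_mat N N" using T1 Osch A chan_carrier by blast
    have TA: "T A = mat N N (\<lambda>ab. \<Sum>j<r. complex_of_real (c j) * Ps j A $$ ab)"
      using T4 A by (intro eq_matI) auto
    have UTA: "U (T A) = mat N N (\<lambda>ab. \<Sum>j<r. complex_of_real (c j) * U (Ps j A) $$ ab)"
      unfolding TA by (rule lin_sum[OF chU PA])
    have "(U \<circ> T) A $$ (a,b) = (\<Sum>t<r*R. complex_of_real (e t) * Ps' t A $$ (a,b))"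
      if a: "a < N" and b: "b < N" for a b
    proof -
      have "(U \<circ> T) A $$ (a,b) = (\<Sum>j<r. complex_of_real (c j) * U (Ps j A) $$ (a,b))"
        using UTA a b by simp
      also have "\<dots> = (\<Sum>j<r. complex_of_real (c j) * (\<Sum>i<R. complex_of_real (d i) * Qs i (Ps j A) $$ (a,b)))"
        using U4 PA a b by (intro sum.cong) auto
      also have "\<dots> = (\<Sum>j<r. \<Sum>i<R. complex_of_real (e (j*R+i)) * Ps' (j*R+i) A $$ (a,b))"
        unfolding e_def Ps'_def using dm by (intro sum.cong) (auto simp: sum_distrib_left ac_simps)
      also have "\<dots> = (\<Sum>t<r*R. complex_of_real (e t) * Ps' t A $$ (a,b))"
        by (rule sum_mult_idx[symmetric])
      finally show ?thesis .
    qed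
    moreover have "(U \<circ> T) A \<in> carrier_mat N N" using UTA by simp
    ultimately show ?thesis by blast
  qed
  ultimately show ?thesis unfolding combo_def by blast
qed



lemma blk_carrier[simp]: "blk N X i j \<in> carrier_mat N N"
  unfolding blk_def by simp

lemma blk_ampl:
  assumes ch: "is_channel N \<Psi>" and i: "i < k" and j: "j < k"
  shows "blk N (ampl N k \<Psi> X) i j = \<Psi> (blk N X i j)"
proof (rule eq_matI)
  have C: "\<Psi> (blk N X i j) \<in> carrier_mat N N" by (rule chan_carrier[OF ch blk_carrier])
  show "dim_row (blk N (ampl N k \<Psi> X) i j) = dim_row (\<Psi> (blk N X i j))" using C by (simp add: blk_def)
  show "dim_col (blk N (ampl N k \<Psi> X) i j) = dim_col (\<Psi> (blk N X i j))" using C by (simp add: blk_def)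
  fix a b assume a: "a < dim_row (\<Psi> (blk N X i j))" and b: "b < dim_col (\<Psi> (blk N X i j))"
  then have a': "a < N" and b': "b < N" using C by auto
  have ia: "i * N + a < k * N"
  proof -
    have "i * N + a < i * N + N" using a' by simp
    also have "\<dots> = Suc i * N" by simp
    also have "\<dots> \<le> k * N" using i by (intro mult_right_mono) auto
    finally show ?thesis .
  qed
  have jb: "j * N + b < k * N"
  proof -
    have "j * N + b < j * N + N" using b' by simp
    also have "\<dots> = Suc j * N" by simp
    also have "\<dots> \<le> k * N" using j by (intro mult_right_mono) auto
    finally show ?thesis .
  qed
  have d1: "(i * N + a) div N = i" "(i * N + a) mod N = a" using a' by auto
  have d2: "(j * N + b) div N = j" "(j * N + b) mod N = b" using b' by auto
  show "blk N (ampl N k \<Psi> X) i j $$ (a, b) = \<Psi> (blk N X i j) $$ (a, b)"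
    using a' b' ia jb d1 d2 by (simp add: blk_def ampl_def)
qed

lemma ampl_comp:
  assumes ch: "is_channel N \<Psi>"
  shows "ampl N k (\<Phi> \<circ> \<Psi>) X = ampl N k \<Phi> (ampl N k \<Psi> X)"
proof (rule eq_matI)
  fix p q assume p: "p < dim_row (ampl N k \<Phi> (ampl N k \<Psi> X))" and q: "q < dim_col (ampl N k \<Phi> (ampl N k \<Psi> X))"
  then have p': "p < k * N" and q': "q < k * N" by (auto simp: ampl_def)
  have pk: "p div N < k" using p' by (simp add: less_mult_imp_div_less)
  have qk: "q div N < k" using q' by (simp add: less_mult_imp_div_less)
  show "ampl N k (\<Phi> \<circ> \<Psi>) X $$ (p, q) = ampl N k \<Phi> (ampl N k \<Psi> X) $$ (p, q)"
    using p' q' blk_ampl[OF ch pk qk, of X] by (simp add: ampl_def)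
qed (auto simp: ampl_def)

lemma chan_comp:
  assumes ch1: "is_channel N \<Phi>" and ch2: "is_channel N \<Psi>"
  shows "is_channel N (\<Phi> \<circ> \<Psi>)"
  unfolding is_channel_def
proof (intro conjI allI ballI impI)
  fix A :: "complex mat" assume "A \<notin> carrier_mat N N"
  then show "(\<Phi> \<circ> \<Psi>) A = 0\<^sub>m N N" using chan_out[OF ch2] chan_zero[OF ch1] by simp
next
  fix A :: "complex mat" assume A: "A \<in> carrier_mat N N"
  show "(\<Phi> \<circ> \<Psi>) A \<in> carrier_mat N N" using A chan_carrier[OF ch1] chan_carrier[OF ch2] by simp
  show "mtrace ((\<Phi> \<circ> \<Psi>) A) = mtrace A" using A chan_carrier[OF ch2] chan_trace[OF ch1] chan_trace[OF ch2] by simp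
  fix c show "(\<Phi> \<circ> \<Psi>) (c \<cdot>\<^sub>m A) = c \<cdot>\<^sub>m (\<Phi> \<circ> \<Psi>) A"
    using A chan_carrier[OF ch2] chan_smult[OF ch1] chan_smult[OF ch2] by simp
next
  fix A B :: "complex mat" assume A: "A \<in> carrier_mat N N" and B: "B \<in> carrier_mat N N"
  show "(\<Phi> \<circ> \<Psi>) (A + B) = (\<Phi> \<circ> \<Psi>) A + (\<Phi> \<circ> \<Psi>) B"
    using A B chan_carrier[OF ch2] chan_add[OF ch1] chan_add[OF ch2] by simp
next
  fix k and X :: "complex mat" assume "psd (k * N) X"
  then show "psd (k * N) (ampl N k (\<Phi> \<circ> \<Psi>) X)"
    unfolding ampl_comp[OF ch2] by (intro chan_cp[OF ch1] chan_cp[OF ch2])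
qed

definition slot :: "cmap \<Rightarrow> cmap option \<Rightarrow> cmap" where
  "slot \<Psi> s = (case s of None \<Rightarrow> \<Psi> | Some \<Phi> \<Rightarrow> \<Phi>)"

lemma comp_slots_Cons: "comp_slots \<Psi> (s # L) = slot \<Psi> s \<circ> comp_slots \<Psi> L"
  by (simp add: comp_slots_def slot_def)

lemma comp_slots_single: "comp_slots \<Psi> [s] = slot \<Psi> s"
  by (simp add: comp_slots_def slot_def)

lemma slot_channel: "\<forall>\<Phi>\<in>Os. is_channel N \<Phi> \<Longrightarrow> is_channel N \<Psi> \<Longrightarrow> (s = None \<or> the s \<in> Os) \<Longrightarrow> is_channel N (slot \<Psi> s)"
  by (cases s) (auto simp: slot_def)

lemma slots_channel:
  assumes Osch: "\<forall>\<Phi>\<in>Os. is_channel N \<Phi>" and chP: "is_channel N \<Psi>"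
  shows "L \<noteq> [] \<Longrightarrow> (\<forall>s\<in>set L. s = None \<or> the s \<in> Os) \<Longrightarrow> is_channel N (comp_slots \<Psi> L)"
proof (induction L)
  case Nil then show ?case by simp
next
  case (Cons s L)
  have cs: "is_channel N (slot \<Psi> s)" using slot_channel[OF Osch chP] Cons.prems by auto
  show ?case
  proof (cases "L = []")
    case True then show ?thesis using cs by (simp add: comp_slots_single)
  next
    case False
    then have "is_channel N (comp_slots \<Psi> L)" using Cons by auto
    then show ?thesis by (simp only: comp_slots_Cons) (rule chan_comp[OF cs])
  qed
qed

lemma slots_combo:
  assumes Osch: "\<forall>\<Phi>\<in>Os. is_channel N \<Phi>" and chP: "is_channel N \<Psi>"
    and closed: "\<forall>\<Phi>\<in>Os. \<forall>\<Phi>'\<in>Os. \<Phi> \<circ> \<Phi>' \<in> Os"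
    and cP: "combo Os N \<Psi> W"
  shows "L \<noteq> [] \<Longrightarrow> (\<forall>s\<in>set L. s = None \<or> the s \<in> Os) \<Longrightarrow>
    combo Os N (comp_slots \<Psi> L) (W ^ length (filter (\<lambda>s. s = None) L))"
proof (induction L)
  case Nil then show ?case by simp
next
  case (Cons s L)
  have cs: "is_channel N (slot \<Psi> s)" using slot_channel[OF Osch chP] Cons.prems by auto
  have cb: "combo Os N (slot \<Psi> s) (W ^ length (filter (\<lambda>s. s = None) [s]))"
  proof (cases s)
    case None then show ?thesis using cP by (simp add: slot_def)
  next
    case (Some \<Phi>)
    then have "\<Phi> \<in> Os" using Cons.prems by auto
    then show ?thesis using Some Osch by (simp add: slot_def combo_single)
  qed
  show ?case
  proof (cases "L = []")
    case True then show ?thesis using cb by (simp add: comp_slots_single)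
  next
    case False
    then have IH: "combo Os N (comp_slots \<Psi> L) (W ^ length (filter (\<lambda>s. s = None) L))"
      using Cons by auto
    have "combo Os N (slot \<Psi> s \<circ> comp_slots \<Psi> L)
        (W ^ length (filter (\<lambda>s. s = None) [s]) * W ^ length (filter (\<lambda>s. s = None) L))"
      by (rule combo_comp[OF cs cb IH Osch closed])
    moreover have "W ^ length (filter (\<lambda>s. s = None) [s]) * W ^ length (filter (\<lambda>s. s = None) L)
        = W ^ length (filter (\<lambda>s. s = None) (s # L))"
      by (cases s) auto
    ultimately show ?thesis by (simp only: comp_slots_Cons)
  qed
qed



lemma ketbra_carrier[simp]: "ketbra N x \<in> carrier_mat N N"
  unfolding ketbra_def by simp

lemma mult_ketbra_diag:
  assumes A: "A \<in> carrier_mat N N" and y: "y < N" and i: "i < N"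
  shows "(A * ketbra N y) $$ (i,i) = (if i = y then A $$ (y,y) else 0)"
proof -
  have "(A * ketbra N y) $$ (i,i) = (\<Sum>k\<in>{0..<N}. A $$ (i,k) * (if k = y \<and> i = y then 1 else 0))"
    using A i by (simp add: ketbra_def scalar_prod_def)
  also have "\<dots> = (\<Sum>k\<in>{0..<N}. if i = y then (if k = y then A $$ (i,k) else 0) else 0)"
    by (intro sum.cong) auto
  also have "\<dots> = (if i = y then A $$ (y,y) else 0)" using y by (simp add: sum.delta')
  finally show ?thesis .
qed

lemma mtrace_carrier: "A \<in> carrier_mat N N \<Longrightarrow> mtrace A = (\<Sum>i<N. A $$ (i,i))"
  unfolding mtrace_def by simp

lemma mtrace_ketbra:
  assumes A: "A \<in> carrier_mat N N" and y: "y < N"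
  shows "mtrace (A * ketbra N y) = A $$ (y,y)"
proof -
  have "A * ketbra N y \<in> carrier_mat N N" using A by simp
  then have "mtrace (A * ketbra N y) = (\<Sum>i<N. (A * ketbra N y) $$ (i,i))" by (rule mtrace_carrier)
  also have "\<dots> = (\<Sum>i<N. if i = y then A $$ (y,y) else 0)"
    using mult_ketbra_diag[OF A y] by (intro sum.cong) auto
  also have "\<dots> = A $$ (y,y)" using y by (simp add: sum.delta')
  finally show ?thesis .
qed

lemma f_ch_eq:
  assumes "T (ketbra (2^n) x) \<in> carrier_mat (2^n) (2^n)" "y < 2^n"
  shows "f_ch n T (x,y) = Re (T (ketbra (2^n) x) $$ (y,y))"
  unfolding f_ch_def using mtrace_ketbra[OF assms] by simp

lemma ketbra_entry: "i < N \<Longrightarrow> j < N \<Longrightarrow> ketbra N x $$ (i,j) = (if i = x \<and> j = x then 1 else 0)"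
  unfolding ketbra_def by simp

lemma psd_ketbra:
  assumes x: "x < N"
  shows "psd N (ketbra N x)"
  unfolding psd_def Let_def
proof (intro conjI allI)
  show "ketbra N x \<in> carrier_mat N N" by simp
  fix v :: "nat \<Rightarrow> complex"
  have "(\<Sum>i<N. \<Sum>j<N. cnj (v i) * ketbra N x $$ (i,j) * v j) = (\<Sum>i<N. if i = x then cnj (v x) * v x else 0)"
  proof (intro sum.cong refl)
    fix i assume i: "i \<in> {..<N}"
    have "(\<Sum>j<N. cnj (v i) * ketbra N x $$ (i,j) * v j) = (\<Sum>j<N. if j = x then (if i = x then cnj (v i) * v j else 0) else 0)"
      using i by (intro sum.cong) (auto simp: ketbra_entry)
    also have "\<dots> = (if i = x then cnj (v x) * v x else 0)" using x by (simp add: sum.delta)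
    finally show "(\<Sum>j<N. cnj (v i) * ketbra N x $$ (i,j) * v j) = (if i = x then cnj (v x) * v x else 0)" .
  qed
  also have "\<dots> = cnj (v x) * v x" using x by (simp add: sum.delta)
  finally have q: "(\<Sum>i<N. \<Sum>j<N. cnj (v i) * ketbra N x $$ (i,j) * v j) = cnj (v x) * v x" .
  show "Im (\<Sum>i<N. \<Sum>j<N. cnj (v i) * ketbra N x $$ (i,j) * v j) = 0" unfolding q by simp
  show "0 \<le> Re (\<Sum>i<N. \<Sum>j<N. cnj (v i) * ketbra N x $$ (i,j) * v j)" unfolding q by simp
qed

lemma psd_diag:
  assumes P: "psd N A" and y: "y < N"
  shows "Im (A $$ (y,y)) = 0 \<and> 0 \<le> Re (A $$ (y,y))"
proof -
  define v :: "nat \<Rightarrow> complex" where "v = (\<lambda>i. if i = y then 1 else 0)"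
  have "(\<Sum>i<N. \<Sum>j<N. cnj (v i) * A $$ (i,j) * v j) = (\<Sum>i<N. if i = y then A $$ (y,y) else 0)"
  proof (intro sum.cong refl)
    fix i assume i: "i \<in> {..<N}"
    have "(\<Sum>j<N. cnj (v i) * A $$ (i,j) * v j) = (\<Sum>j<N. if j = y then (if i = y then A $$ (i,j) else 0) else 0)"
      by (intro sum.cong) (auto simp: v_def)
    also have "\<dots> = (if i = y then A $$ (y,y) else 0)" using y by (simp add: sum.delta)
    finally show "(\<Sum>j<N. cnj (v i) * A $$ (i,j) * v j) = (if i = y then A $$ (y,y) else 0)" .
  qed
  also have "\<dots> = A $$ (y,y)" using y by (simp add: sum.delta)
  finally have q: "(\<Sum>i<N. \<Sum>j<N. cnj (v i) * A $$ (i,j) * v j) = A $$ (y,y)" .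
  have all: "\<And>w. Im (\<Sum>i<N. \<Sum>j<N. cnj (w i) * A $$ (i,j) * w j) = 0 \<and> 0 \<le> Re (\<Sum>i<N. \<Sum>j<N. cnj (w i) * A $$ (i,j) * w j)"
    using P unfolding psd_def Let_def by blast
  show ?thesis using all[of v] unfolding q .
qed

lemma ampl1:
  assumes ch: "is_channel N \<Phi>" and K: "K \<in> carrier_mat N N"
  shows "ampl N 1 \<Phi> K = \<Phi> K"
proof -
  have b: "blk N K 0 0 = K" using K by (intro eq_matI) (auto simp: blk_def)
  have C: "\<Phi> K \<in> carrier_mat N N" by (rule chan_carrier[OF ch K])
  show ?thesis
  proof (rule eq_matI)
    fix p q assume "p < dim_row (\<Phi> K)" "q < dim_col (\<Phi> K)"
    then have "p < N" "q < N" using C by auto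
    then show "ampl N 1 \<Phi> K $$ (p, q) = \<Phi> K $$ (p, q)" by (simp add: ampl_def b)
  qed (use C in \<open>auto simp: ampl_def\<close>)
qed

lemma f_bound:
  assumes ch: "qchannel n \<Phi>" and z: "z \<in> dom_n n"
  shows "\<bar>f_ch n \<Phi> z\<bar> \<le> 1"
proof -
  define N :: nat where "N = 2^n"
  obtain x y where zxy: "z = (x,y)" and x: "x < N" and y: "y < N" using z by (auto simp: dom_n_def N_def)
  have chN: "is_channel N \<Phi>" using ch by (simp add: qchannel_def N_def)
  define K where "K = ketbra N x"
  have K: "K \<in> carrier_mat N N" by (simp add: K_def)
  have C: "\<Phi> K \<in> carrier_mat N N" by (rule chan_carrier[OF chN K])
  have "psd (1 * N) K" using psd_ketbra[OF x] by (simp add: K_def)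
  then have "psd (1 * N) (ampl N 1 \<Phi> K)" by (rule chan_cp[OF chN])
  then have P: "psd N (\<Phi> K)" using ampl1[OF chN K] by simp
  have tr: "mtrace (\<Phi> K) = 1"
  proof -
    have "mtrace K = (\<Sum>i<N. K $$ (i,i))" using K by (rule mtrace_carrier)
    also have "\<dots> = (\<Sum>i<N. if i = x then 1 else 0)" by (intro sum.cong) (auto simp: K_def ketbra_entry)
    also have "\<dots> = 1" using x by simp
    finally show ?thesis using chan_trace[OF chN K] by simp
  qed
  have "(\<Sum>i<N. Re (\<Phi> K $$ (i,i))) = 1"
    using tr mtrace_carrier[OF C] by (metis Re_sum one_complex.sel(1))
  moreover have "Re (\<Phi> K $$ (y,y)) \<le> (\<Sum>i<N. Re (\<Phi> K $$ (i,i)))"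
    using y psd_diag[OF P] by (intro member_le_sum) auto
  moreover have "0 \<le> Re (\<Phi> K $$ (y,y))" using psd_diag[OF P y] by simp
  moreover have "f_ch n \<Phi> z = Re (\<Phi> K $$ (y,y))"
    unfolding zxy K_def using f_ch_eq[of \<Phi> n x y] C y by (simp add: K_def N_def)
  ultimately show ?thesis by simp
qed

lemma combo_fun:
  assumes cb: "combo Os (2^n) T W" and Osch: "\<forall>\<Phi>\<in>Os. qchannel n \<Phi>"
  shows "\<exists>(r::nat) (c::nat\<Rightarrow>real) Ps. (\<forall>j<r. Ps j \<in> Os) \<and> (\<Sum>j<r. c j) = 1 \<and> (\<Sum>j<r. \<bar>c j\<bar>) \<le> W
     \<and> (\<forall>z\<in>dom_n n. f_ch n T z = (\<Sum>j<r. c j * f_ch n (Ps j) z))"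
proof -
  obtain r :: nat and c :: "nat \<Rightarrow> real" and Ps where
    T1: "\<forall>j<r. Ps j \<in> Os" and T2: "(\<Sum>j<r. c j) = 1" and T3: "(\<Sum>j<r. \<bar>c j\<bar>) \<le> W"
    and T4: "\<forall>A\<in>carrier_mat (2^n) (2^n). T A \<in> carrier_mat (2^n) (2^n) \<and>
        (\<forall>a<2^n. \<forall>b<2^n. T A $$ (a,b) = (\<Sum>j<r. complex_of_real (c j) * Ps j A $$ (a,b)))"
    using cb unfolding combo_def by blast
  have "f_ch n T z = (\<Sum>j<r. c j * f_ch n (Ps j) z)" if z: "z \<in> dom_n n" for z
  proof -
    obtain x y where zxy: "z = (x,y)" and y: "y < 2^n" using z by (auto simp: dom_n_def)
    define K where "K = ketbra (2^n) x"
    have K: "K \<in> carrier_mat (2^n) (2^n)" by (simp add: K_def)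
    have "f_ch n T z = Re (T K $$ (y,y))" unfolding zxy K_def using f_ch_eq[of T n x y] T4 K y by (simp add: K_def)
    also have "\<dots> = Re (\<Sum>j<r. complex_of_real (c j) * Ps j K $$ (y,y))" using T4 K y by simp
    also have "\<dots> = (\<Sum>j<r. c j * Re (Ps j K $$ (y,y)))" by (simp add: Re_sum)
    also have "\<dots> = (\<Sum>j<r. c j * f_ch n (Ps j) z)"
    proof (intro sum.cong refl)
      fix j assume "j \<in> {..<r}"
      then have "qchannel n (Ps j)" using T1 Osch by auto
      then have "Ps j K \<in> carrier_mat (2^n) (2^n)" using K chan_carrier by (auto simp: qchannel_def)
      then show "c j * Re (Ps j K $$ (y,y)) = c j * f_ch n (Ps j) z"
        unfolding zxy K_def using f_ch_eq[of "Ps j" n x y] y by (simp add: K_def)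
    qed
    finally show ?thesis .
  qed
  then show ?thesis using T1 T2 T3 by blast
qed



definition adm :: "nat \<Rightarrow> cmap set \<Rightarrow> cmap \<Rightarrow> real \<Rightarrow> bool" where
  "adm n Os T l \<longleftrightarrow> l \<ge> 0 \<and> (\<exists>\<Phi>' \<in> conv_ch (2^n) Os. mix_ch (2^n) l T \<Phi>' \<in> conv_ch (2^n) Os)"

lemma rob_props:
  assumes "robustness n Os T < \<infinity>"
  shows "\<exists>\<rho>. robustness n Os T = ereal \<rho> \<and> \<rho> \<ge> 0 \<and> (\<forall>e>0. \<exists>l. adm n Os T l \<and> l < \<rho> + e)"
proof -
  define A where "A = {ereal l | l. adm n Os T l}"
  have R: "robustness n Os T = Inf A" unfolding robustness_def A_def adm_def by simp
  have Ane: "A \<noteq> {}" using assms R by (auto simp: top_ereal_def)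
  have A0: "0 \<le> Inf A" unfolding A_def by (rule Inf_greatest) (auto simp: adm_def)
  have Af: "Inf A < \<infinity>" using assms R by simp
  obtain \<rho> where rho: "Inf A = ereal \<rho>" using A0 Af by (cases "Inf A") auto
  have "\<rho> \<ge> 0" using A0 rho by simp
  moreover have "\<exists>l. adm n Os T l \<and> l < \<rho> + e" if e: "e > 0" for e
  proof -
    have "Inf A < ereal (\<rho> + e)" using rho e by simp
    then obtain x where "x \<in> A" "x < ereal (\<rho> + e)" by (auto simp: Inf_less_iff)
    then show ?thesis unfolding A_def by auto
  qed
  ultimately show ?thesis using R rho by auto
qed

lemma eps_limit:
  fixes a b G E :: real
  assumes "\<forall>e>0. E \<le> (a + b * e) ^ k * G"
  shows "E \<le> a ^ k * G"
proof -
  have t: "((\<lambda>e. (a + b * e) ^ k * G) \<longlongrightarrow> (a + b * 0) ^ k * G) (at_right 0)"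
    by (intro tendsto_intros)
  have ev: "eventually (\<lambda>e. E \<le> (a + b * e) ^ k * G) (at_right (0::real))"
    using assms eventually_at_right_less[of 0] by (auto elim: eventually_mono)
  have "E \<le> (a + b * 0) ^ k * G"
    by (rule tendsto_lowerbound[OF t ev]) (simp add: trivial_limit_at_right_real)
  then show ?thesis by simp
qed



lemma gb_app:
  assumes O_ch: "\<forall>\<Phi> \<in> Os. qchannel n \<Phi>" and O_ne: "Os \<noteq> {}"
    and Sv: "\<forall>i<m. S i \<in> dom_n n" and Nn: "Nn \<ge> 0" and sub: "Os \<subseteq> Q"
    and cb: "\<forall>T\<in>Q. combo Os (2^n) T (1 + 2 * Nn)"
  shows "emp_gauss m S (F_cls n Q) \<le> (1 + 2 * Nn) * emp_gauss m S (F_cls n Os) \<and> 0 \<le> emp_gauss m S (F_cls n Os)"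
  unfolding F_cls_def
proof (rule gauss_bound)
  show "f_ch n ` Os \<noteq> {}" using O_ne by simp
  show "f_ch n ` Q \<noteq> {}" using O_ne sub by auto
  show "0 \<le> Nn" by (rule Nn)
  show "\<forall>h\<in>f_ch n ` Os. \<forall>i<m. \<bar>h (S i)\<bar> \<le> 1" using O_ch Sv f_bound by blast
  show "\<forall>f\<in>f_ch n ` Q. \<exists>(r::nat) (c::nat\<Rightarrow>real) hs. (\<forall>j<r. hs j \<in> f_ch n ` Os) \<and> (\<Sum>j<r. c j) = 1 \<and>
          (\<Sum>j<r. \<bar>c j\<bar>) \<le> 1 + 2 * Nn \<and> (\<forall>i<m. f (S i) = (\<Sum>j<r. c j * hs j (S i)))"
  proof
    fix f assume "f \<in> f_ch n ` Q"
    then obtain T where T: "T \<in> Q" and f: "f = f_ch n T" by auto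
    obtain r :: nat and c :: "nat \<Rightarrow> real" and Ps where
      p: "\<forall>j<r. Ps j \<in> Os" "(\<Sum>j<r. c j) = 1" "(\<Sum>j<r. \<bar>c j\<bar>) \<le> 1 + 2 * Nn"
        "\<forall>z\<in>dom_n n. f_ch n T z = (\<Sum>j<r. c j * f_ch n (Ps j) z)"
      using combo_fun[OF bspec[OF cb T] O_ch] by blast
    show "\<exists>(r::nat) (c::nat\<Rightarrow>real) hs. (\<forall>j<r. hs j \<in> f_ch n ` Os) \<and> (\<Sum>j<r. c j) = 1 \<and>
          (\<Sum>j<r. \<bar>c j\<bar>) \<le> 1 + 2 * Nn \<and> (\<forall>i<m. f (S i) = (\<Sum>j<r. c j * hs j (S i)))"
      by (rule exI[of _ r], rule exI[of _ c], rule exI[of _ "\<lambda>j. f_ch n (Ps j)"])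
        (use p Sv f in auto)
  qed
qed

theorem mainTheorem11:
  fixes n k :: nat
    and \<O> :: "(complex mat \<Rightarrow> complex mat) set"
    and \<Psi> :: "complex mat \<Rightarrow> complex mat"
  assumes O_ch: "\<forall>\<Phi> \<in> \<O>. qchannel n \<Phi>"
    and O_ne: "\<O> \<noteq> {}"
    and O_comp: "\<forall>\<Phi> \<in> \<O>. \<forall>\<Phi>' \<in> \<O>. \<Phi> \<circ> \<Phi>' \<in> \<O>"
    and Psi_ch: "qchannel n \<Psi>"
    and Psi_fin: "robustness n \<O> \<Psi> < \<infinity>"
  shows "(\<forall>(m::nat) (S::nat \<Rightarrow> nat \<times> nat). (\<forall>i<m. S i \<in> dom_n n) \<longrightarrow>
            ereal (emp_gauss m S (F_cls n (O_k \<O> \<Psi> k)))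
              \<le> min (1 + 2 * gamma_max n \<O>) ((1 + 2 * robustness n \<O> \<Psi>) ^ k)
                 * ereal (emp_gauss m S (F_cls n \<O>)))
       \<and> (\<forall>(m::nat) (D::(nat \<times> nat) pmf). set_pmf D \<subseteq> dom_n n \<longrightarrow>
            ereal (gauss_cx m D (0,0) (F_cls n (O_k \<O> \<Psi> k)))
              \<le> min (1 + 2 * gamma_max n \<O>) ((1 + 2 * robustness n \<O> \<Psi>) ^ k)
                 * ereal (gauss_cx m D (0,0) (F_cls n \<O>)))"
proof -
  define N :: nat where "N = 2^n"
  have Osch: "\<forall>\<Phi>\<in>\<O>. is_channel N \<Phi>" using O_ch by (simp add: qchannel_def N_def)
  have chP: "is_channel N \<Psi>" using Psi_ch by (simp add: qchannel_def N_def)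
  obtain \<rho> where rho: "robustness n \<O> \<Psi> = ereal \<rho>" "\<rho> \<ge> 0" "\<forall>e>0. \<exists>l. adm n \<O> \<Psi> l \<and> l < \<rho> + e"
    using rob_props[OF Psi_fin] by blast
  have Ok_ch: "\<forall>T\<in>O_k \<O> \<Psi> k. is_channel N T"
    unfolding O_k_def using slots_channel[OF Osch chP] by blast
  have O_sub: "\<O> \<subseteq> O_k \<O> \<Psi> k"
  proof
    fix \<Phi> assume "\<Phi> \<in> \<O>"
    then show "\<Phi> \<in> O_k \<O> \<Psi> k" unfolding O_k_def
      by (intro CollectI exI[of _ "[Some \<Phi>]"]) (auto simp: comp_slots_single slot_def)
  qed
  have combo_adm: "combo \<O> N T (1 + 2 * l)" if "is_channel N T" "adm n \<O> T l" for T l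
    using that combo_rob[OF that(1) _ _ _ Osch] unfolding adm_def N_def by blast
  have partA: "emp_gauss m S (F_cls n (O_k \<O> \<Psi> k)) \<le> (1 + 2 * \<rho>) ^ k * emp_gauss m S (F_cls n \<O>)
       \<and> 0 \<le> emp_gauss m S (F_cls n \<O>)" if Sv: "\<forall>i<m. S i \<in> dom_n n" for m S
  proof -
    define E where "E = emp_gauss m S (F_cls n (O_k \<O> \<Psi> k))"
    define G where "G = emp_gauss m S (F_cls n \<O>)"
    have step: "E \<le> (1 + 2 * l) ^ k * G \<and> 0 \<le> G" if a: "adm n \<O> \<Psi> l" for l
    proof -
      have l0: "l \<ge> 0" using a by (simp add: adm_def)
      define W where "W = 1 + 2 * l"
      have W1: "1 \<le> W" using l0 by (simp add: W_def)
      have cP: "combo \<O> N \<Psi> W" unfolding W_def by (rule combo_adm[OF chP a])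
      have wk: "(1 + 2 * ((W ^ k - 1) / 2)) = W ^ k" by (simp add: field_simps)
      have cb: "\<forall>T\<in>O_k \<O> \<Psi> k. combo \<O> (2^n) T (1 + 2 * ((W ^ k - 1) / 2))"
      proof
        fix T assume "T \<in> O_k \<O> \<Psi> k"
        then obtain L where L: "T = comp_slots \<Psi> L" "L \<noteq> []" "\<forall>s\<in>set L. s = None \<or> the s \<in> \<O>"
          "length (filter (\<lambda>s. s = None) L) \<le> k" unfolding O_k_def by blast
        have "combo \<O> N T (W ^ length (filter (\<lambda>s. s = None) L))"
          using slots_combo[OF Osch chP O_comp cP L(2,3)] L(1) by simp
        moreover have "W ^ length (filter (\<lambda>s. s = None) L) \<le> W ^ k"
          by (rule power_increasing[OF L(4) W1])
        ultimately have "combo \<O> N T (W ^ k)" by (rule combo_mono)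
        moreover have "(1 + 2 * ((W ^ k - 1) / 2)) = W ^ k" by (simp add: field_simps)
        ultimately show "combo \<O> (2^n) T (1 + 2 * ((W ^ k - 1) / 2))" by (simp only: N_def)
      qed
      have Nn: "(W ^ k - 1) / 2 \<ge> 0" using W1 by (simp add: one_le_power)
      have "E \<le> (1 + 2 * ((W ^ k - 1) / 2)) * G \<and> 0 \<le> G"
        unfolding E_def G_def by (rule gb_app[OF O_ch O_ne Sv Nn O_sub cb])
      then have "E \<le> W ^ k * G \<and> 0 \<le> G" unfolding wk .
      then show ?thesis unfolding W_def .
    qed
    obtain l1 where "adm n \<O> \<Psi> l1" using rho(3)[rule_format, of 1] by auto
    then have G0: "0 \<le> G" using step by blast
    have "\<forall>e>0. E \<le> ((1 + 2 * \<rho>) + 2 * e) ^ k * G"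
    proof (intro allI impI)
      fix e :: real assume e: "e > 0"
      obtain l where l: "adm n \<O> \<Psi> l" "l < \<rho> + e" using rho(3) e by blast
      have l0: "0 \<le> l" using l(1) by (simp add: adm_def)
      have "(1 + 2 * l) ^ k \<le> ((1 + 2 * \<rho>) + 2 * e) ^ k"
        using l l0 by (intro power_mono) auto
      then have "(1 + 2 * l) ^ k * G \<le> ((1 + 2 * \<rho>) + 2 * e) ^ k * G" using G0 by (rule mult_right_mono)
      then show "E \<le> ((1 + 2 * \<rho>) + 2 * e) ^ k * G" using step[OF l(1)] by linarith
    qed
    then have "E \<le> (1 + 2 * \<rho>) ^ k * G" by (rule eps_limit)
    then show ?thesis using G0 unfolding E_def G_def by simp
  qed
  have gm_ge: "robustness n \<O> \<Psi> \<le> gamma_max n \<O>"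
    unfolding gamma_max_def using Psi_ch by (intro SUP_upper) auto
  have partB: "emp_gauss m S (F_cls n (O_k \<O> \<Psi> k)) \<le> (1 + 2 * R) * emp_gauss m S (F_cls n \<O>)"
    if Sv: "\<forall>i<m. S i \<in> dom_n n" and R: "gamma_max n \<O> = ereal R" for m S R
  proof -
    define E where "E = emp_gauss m S (F_cls n (O_k \<O> \<Psi> k))"
    define G where "G = emp_gauss m S (F_cls n \<O>)"
    have R0: "0 \<le> R" using gm_ge rho R by simp
    have "\<forall>e>0. E \<le> ((1 + 2 * R) + 2 * e) ^ 1 * G"
    proof (intro allI impI)
      fix e :: real assume e: "e > 0"
      have cb: "\<forall>T\<in>O_k \<O> \<Psi> k. combo \<O> (2^n) T (1 + 2 * (R + e))"
      proof
        fix T assume T: "T \<in> O_k \<O> \<Psi> k"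
        have chT: "is_channel N T" using Ok_ch T by blast
        have "robustness n \<O> T \<le> gamma_max n \<O>"
          unfolding gamma_max_def using chT by (intro SUP_upper) (auto simp: qchannel_def N_def)
        then have fin: "robustness n \<O> T < \<infinity>" using R by auto
        obtain \<rho>T where rT: "robustness n \<O> T = ereal \<rho>T" "\<forall>e>0. \<exists>l. adm n \<O> T l \<and> l < \<rho>T + e"
          using rob_props[OF fin] by blast
        have "\<rho>T \<le> R" using \<open>robustness n \<O> T \<le> gamma_max n \<O>\<close> rT(1) R by simp
        obtain l where l: "adm n \<O> T l" "l < \<rho>T + e" using rT(2) e by blast
        have "combo \<O> N T (1 + 2 * l)" by (rule combo_adm[OF chT l(1)])
        moreover have "1 + 2 * l \<le> 1 + 2 * (R + e)" using l(2) \<open>\<rho>T \<le> R\<close> by simp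
        ultimately show "combo \<O> (2^n) T (1 + 2 * (R + e))" unfolding N_def by (rule combo_mono)
      qed
      have "E \<le> (1 + 2 * (R + e)) * G \<and> 0 \<le> G"
        unfolding E_def G_def using R0 e by (intro gb_app[OF O_ch O_ne Sv _ O_sub cb]) simp
      then show "E \<le> ((1 + 2 * R) + 2 * e) ^ 1 * G" by (simp add: algebra_simps)
    qed
    then have "E \<le> (1 + 2 * R) ^ 1 * G" by (rule eps_limit)
    then show ?thesis unfolding E_def G_def by simp
  qed
  define c' where "c' = (if gamma_max n \<O> = \<infinity> then (1 + 2 * \<rho>) ^ k
      else min (1 + 2 * real_of_ereal (gamma_max n \<O>)) ((1 + 2 * \<rho>) ^ k))"
  have bexp: "(1 + 2 * robustness n \<O> \<Psi>) ^ k = ereal ((1 + 2 * \<rho>) ^ k)"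
    using rho(1) by (simp add: add.commute)
  have cmin: "min (1 + 2 * gamma_max n \<O>) ((1 + 2 * robustness n \<O> \<Psi>) ^ k) = ereal c'"
  proof (cases "gamma_max n \<O> = \<infinity>")
    case True then show ?thesis unfolding bexp c'_def by simp
  next
    case False
    have "gamma_max n \<O> \<ge> 0" using gm_ge rho by (metis ereal_less_eq(5) order_trans)
    then obtain R where R: "gamma_max n \<O> = ereal R" using False by (cases "gamma_max n \<O>") auto
    then show ?thesis unfolding bexp c'_def by (simp add: add.commute)
  qed
  have gm0: "gamma_max n \<O> \<ge> 0" using gm_ge rho by (metis ereal_less_eq(5) order_trans)
  have c0: "0 \<le> c'" unfolding c'_def using rho(2) real_of_ereal_pos[OF gm0] by auto
  have key: "emp_gauss m S (F_cls n (O_k \<O> \<Psi> k)) \<le> c' * emp_gauss m S (F_cls n \<O>)"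
    if Sv: "\<forall>i<m. S i \<in> dom_n n" for m S
  proof (cases "gamma_max n \<O> = \<infinity>")
    case True then show ?thesis using partA[OF Sv] unfolding c'_def by simp
  next
    case False
    have "gamma_max n \<O> \<ge> 0" using gm_ge rho by (metis ereal_less_eq(5) order_trans)
    then obtain R where R: "gamma_max n \<O> = ereal R" using False by (cases "gamma_max n \<O>") auto
    then show ?thesis using partA[OF Sv] partB[OF Sv R] unfolding c'_def by (simp add: min_def)
  qed
  show ?thesis
  proof (intro conjI allI impI)
    fix m :: nat and S :: "nat \<Rightarrow> nat \<times> nat" assume Sv: "\<forall>i<m. S i \<in> dom_n n"
    show "ereal (emp_gauss m S (F_cls n (O_k \<O> \<Psi> k)))
              \<le> min (1 + 2 * gamma_max n \<O>) ((1 + 2 * robustness n \<O> \<Psi>) ^ k)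
                 * ereal (emp_gauss m S (F_cls n \<O>))"
      unfolding cmin using key[OF Sv] by simp
  next
    fix m :: nat and D :: "(nat \<times> nat) pmf" assume D: "set_pmf D \<subseteq> dom_n n"
    define PP where "PP = Pi_pmf {..<m} (0::nat,0::nat) (\<lambda>_. D)"
    have fdom: "finite (dom_n n)" by (simp add: dom_n_def)
    have finP: "finite (set_pmf PP)"
      unfolding PP_def set_Pi_pmf[OF finite_lessThan]
      by (intro finite_PiE_dflt) (use D fdom in \<open>auto intro: finite_subset\<close>)
    have Sv: "\<forall>i<m. S i \<in> dom_n n" if "S \<in> set_pmf PP" for S
      using that D unfolding PP_def set_Pi_pmf[OF finite_lessThan] by (auto simp: PiE_dflt_def)
    have "measure_pmf.expectation PP (\<lambda>S. emp_gauss m S (F_cls n (O_k \<O> \<Psi> k)))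
        \<le> measure_pmf.expectation PP (\<lambda>S. c' * emp_gauss m S (F_cls n \<O>))"
      using finP key Sv by (intro integral_mono_AE integrable_measure_pmf_finite AE_pmfI) auto
    also have "\<dots> = c' * measure_pmf.expectation PP (\<lambda>S. emp_gauss m S (F_cls n \<O>))" by simp
    finally show "ereal (gauss_cx m D (0,0) (F_cls n (O_k \<O> \<Psi> k)))
              \<le> min (1 + 2 * gamma_max n \<O>) ((1 + 2 * robustness n \<O> \<Psi>) ^ k)
                 * ereal (gauss_cx m D (0,0) (F_cls n \<O>))"
      unfolding cmin gauss_cx_def PP_def[symmetric] by simp
  qed
qed


end
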